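(* Let $\lambda,\mu$ be partitions with at most $n$ parts (viewed as elements of $\mathbb{Z}^n$) such that $|\lambda|\ge|\mu|$. Then $$\widetilde{K}^{C_n}_{\lambda,\mu}(q)=q^{\frac{|\lambda|-|\mu|}{2}}\sum_{\gamma\in\widetilde{\mathcal{P}}_n}\ \sum_{\sigma\in S_n}(-1)^{l(\sigma)}\,c(\sigma\circ\lambda-\gamma)\,K^{A_{n-1}}_{\gamma,\mu}(q),$$ $$\widetilde{K}^{D_n}_{\lambda,\mu}(q)=q^{\frac{|\lambda|-|\mu|}{2}}\sum_{\gamma\in\widetilde{\mathcal{P}}_n}\ \sum_{\sigma\in S_n}(-1)^{l(\sigma)}\,d(\sigma\circ\lambda-\gamma)\,K^{A_{n-1}}_{\gamma,\mu}(q).$$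
   Context: Fix $n\ge1$. Notation: $x^\beta=x_1^{\beta_1}\cdots x_n^{\beta_n}$, $|\beta|=\sum_i\beta_i$, $\rho_n=(n,n-1,\dots,1)$. The symmetric group $S_n$ acts on $\mathbb{Z}^n$ by permuting coordinates; $l(\sigma)$ is the number of inversions of $\sigma$; the dot action is $\sigma\circ\beta=\sigma(\beta+\rho_n)-\rho_n$. $\widetilde{\mathcal{P}}_n=\{\gamma\in\mathbb{Z}^n:\gamma_1\ge\cdots\ge\gamma_n\}$. $q$-partition functions: $\mathcal{P}^A_q(\beta)$, $\mathcal{P}^C_q(\beta)$, $\mathcal{P}^D_q(\beta)$ are the coefficients of $x^\beta$ in respectively $\prod_{i<j}(1-qx_i/x_j)^{-1}$, $\prod_{i<j}(1-qx_i/x_j)^{-1}\prod_{r\le s}(1-qx_rx_s)^{-1}$, $\prod_{i<j}(1-qx_i/x_j)^{-1}\prod_{r<s}(1-qx_rx_s)^{-1}$ (all indices in $\{1,\dots,n\}$). $c(\beta)$ (resp. $d(\beta)$) is the coefficient of $x^{-\beta}$ in $\prod_{1\le r\le s\le n}(1-\frac1{x_rx_s})^{-1}$ (resp. $\prod_{1\le r<s\le n}(1-\frac1{x_rx_s})^{-1}$). For $\gamma,\mu\in\mathbb{Z}^n$: $K^{A_{n-1}}_{\gamma,\mu}(q)=\sum_{\sigma\in S_n}(-1)^{l(\sigma)}\mathcal{P}^A_q(\sigma(\gamma+\rho_n)-(\mu+\rho_n))$ (for partitions this is the usual Kostka–Foulkes polynomial), and for $X\in\{C,D\}$: $\widetilde{K}^{X_n}_{\lambda,\mu}(q)=\sum_{\sigma\in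 S_n}(-1)^{l(\sigma)}\mathcal{P}^X_q(\sigma(\lambda+\rho_n)-(\mu+\rho_n))$. *)

theory Defs
  imports "HOL-Combinatorics.Permutations" "HOL-Computational_Algebra.Polynomial"
begin

(* Vectors in Z^n are functions nat => int; only the coordinates 0..<n matter
   (coordinate i+1 of the paper is index i here). *)
type_synonym zvec = "nat \<Rightarrow> int"

definition unitv :: "nat \<Rightarrow> zvec" where
  "unitv i = (\<lambda>k. if k = i then 1 else 0)"

definition wt :: "nat \<Rightarrow> zvec \<Rightarrow> int" where
  "wt n \<beta> = (\<Sum>i<n. \<beta> i)"

definition rho :: "nat \<Rightarrow> zvec" where
  "rho n = (\<lambda>i. if i < n then int n - int i else 0)"

definition inversions :: "nat \<Rightarrow> (nat \<Rightarrow> nat) \<Rightarrow> nat" where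
  "inversions n \<sigma> = card {(i, j). i < j \<and> j < n \<and> \<sigma> j < \<sigma> i}"

definition pact :: "(nat \<Rightarrow> nat) \<Rightarrow> zvec \<Rightarrow> zvec" where
  "pact \<sigma> \<beta> = \<beta> \<circ> inv \<sigma>"

definition vadd :: "zvec \<Rightarrow> zvec \<Rightarrow> zvec" where
  "vadd \<alpha> \<beta> = (\<lambda>i. \<alpha> i + \<beta> i)"

definition vsub :: "zvec \<Rightarrow> zvec \<Rightarrow> zvec" where
  "vsub \<alpha> \<beta> = (\<lambda>i. \<alpha> i - \<beta> i)"

definition dotact :: "nat \<Rightarrow> (nat \<Rightarrow> nat) \<Rightarrow> zvec \<Rightarrow> zvec" where
  "dotact n \<sigma> \<beta> = vsub (pact \<sigma> (vadd \<beta> (rho n))) (rho n)"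

definition Sn :: "nat \<Rightarrow> (nat \<Rightarrow> nat) set" where
  "Sn n = {\<sigma>. \<sigma> permutes {0..<n}}"

definition Ptilde :: "nat \<Rightarrow> zvec set" where
  "Ptilde n = {\<gamma>. (\<forall>i. n \<le> i \<longrightarrow> \<gamma> i = 0) \<and> (\<forall>i j. i \<le> j \<longrightarrow> j < n \<longrightarrow> \<gamma> j \<le> \<gamma> i)}"

definition is_partition :: "nat \<Rightarrow> zvec \<Rightarrow> bool" where
  "is_partition n lam \<longleftrightarrow> lam \<in> Ptilde n \<and> (\<forall>i<n. 0 \<le> lam i)"

definition rootsA :: "nat \<Rightarrow> zvec set" where
  "rootsA n = {vsub (unitv i) (unitv j) | i j. i < j \<and> j < n}"

definition longC :: "nat \<Rightarrow> zvec set" where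
  "longC n = {vadd (unitv r) (unitv s) | r s. r \<le> s \<and> s < n}"

definition longD :: "nat \<Rightarrow> zvec set" where
  "longD n = {vadd (unitv r) (unitv s) | r s. r < s \<and> s < n}"

(* multiplicity functions m on a set R of (distinct) vectors with sum_alpha m(alpha) alpha = beta:
   expanding prod_{alpha in R} (1 - q x^alpha)^{-1} = sum_m q^{|m|} x^{sum m(alpha) alpha} *)
definition mults :: "nat \<Rightarrow> zvec set \<Rightarrow> zvec \<Rightarrow> (zvec \<Rightarrow> nat) set" where
  "mults n R \<beta> = {m. (\<forall>\<alpha>. \<alpha> \<notin> R \<longrightarrow> m \<alpha> = 0) \<and>
                     (\<forall>i<n. (\<Sum>\<alpha>\<in>R. int (m \<alpha>) * \<alpha> i) = \<beta> i)}"

(* coefficient of x^beta in prod_{alpha in R} (1 - q x^alpha)^{-1}, a polynomial in q *)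
definition qpart :: "nat \<Rightarrow> zvec set \<Rightarrow> zvec \<Rightarrow> int poly" where
  "qpart n R \<beta> = (\<Sum>m\<in>mults n R \<beta>. monom 1 (\<Sum>\<alpha>\<in>R. m \<alpha>))"

definition PA :: "nat \<Rightarrow> zvec \<Rightarrow> int poly" where
  "PA n \<beta> = qpart n (rootsA n) \<beta>"

definition PC :: "nat \<Rightarrow> zvec \<Rightarrow> int poly" where
  "PC n \<beta> = qpart n (rootsA n \<union> longC n) \<beta>"

definition PD :: "nat \<Rightarrow> zvec \<Rightarrow> int poly" where
  "PD n \<beta> = qpart n (rootsA n \<union> longD n) \<beta>"

(* c(beta), d(beta): coefficient of x^{-beta} in prod (1 - 1/(x_r x_s))^{-1} *)
definition cC :: "nat \<Rightarrow> zvec \<Rightarrow> int" where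
  "cC n \<beta> = int (card (mults n (longC n) \<beta>))"

definition dD :: "nat \<Rightarrow> zvec \<Rightarrow> int" where
  "dD n \<beta> = int (card (mults n (longD n) \<beta>))"

definition altsum :: "nat \<Rightarrow> (zvec \<Rightarrow> int poly) \<Rightarrow> zvec \<Rightarrow> zvec \<Rightarrow> int poly" where
  "altsum n P lam \<mu> = (\<Sum>\<sigma>\<in>Sn n. (-1) ^ inversions n \<sigma> *
       P (vsub (pact \<sigma> (vadd lam (rho n))) (vadd \<mu> (rho n))))"

definition KA :: "nat \<Rightarrow> zvec \<Rightarrow> zvec \<Rightarrow> int poly" where
  "KA n \<gamma> \<mu> = altsum n (PA n) \<gamma> \<mu>"

definition KC :: "nat \<Rightarrow> zvec \<Rightarrow> zvec \<Rightarrow> int poly" where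
  "KC n lam \<mu> = altsum n (PC n) lam \<mu>"

definition KD :: "nat \<Rightarrow> zvec \<Rightarrow> zvec \<Rightarrow> int poly" where
  "KD n lam \<mu> = altsum n (PD n) lam \<mu>"

definition rhs_term :: "nat \<Rightarrow> (zvec \<Rightarrow> int) \<Rightarrow> zvec \<Rightarrow> zvec \<Rightarrow> zvec \<Rightarrow> int poly" where
  "rhs_term n cf lam \<mu> \<gamma> = (\<Sum>\<sigma>\<in>Sn n. (-1) ^ inversions n \<sigma> *
       smult (cf (vsub (dotact n \<sigma> lam) \<gamma>)) (KA n \<gamma> \<mu>))"

(* the sum over gamma in Ptilde_n, understood as a sum over the (finite) support *)
definition rhs :: "nat \<Rightarrow> (zvec \<Rightarrow> int) \<Rightarrow> zvec \<Rightarrow> zvec \<Rightarrow> int poly" where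
  "rhs n cf lam \<mu> = monom 1 (nat ((wt n lam - wt n \<mu>) div 2)) *
     (\<Sum>\<gamma>\<in>{\<gamma>\<in>Ptilde n. rhs_term n cf lam \<mu> \<gamma> \<noteq> 0}. rhs_term n cf lam \<mu> \<gamma>)"

end

theory Submission
  imports Defs
begin


definition Ppairs :: "nat \<Rightarrow> (nat \<times> nat) set" where
  "Ppairs n = {(i,j). i < j \<and> j < n}"

definition Esg :: "nat \<Rightarrow> (nat \<Rightarrow> nat) \<Rightarrow> int" where
  "Esg n \<sigma> = (\<Prod>p\<in>Ppairs n. sgn (int (\<sigma> (snd p)) - int (\<sigma> (fst p))))"

lemma finite_Ppairs: "finite (Ppairs n)"
  by (rule finite_subset[of _ "{..<n} \<times> {..<n}"]) (auto simp: Ppairs_def)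

lemma Esg_inv:
  assumes "inj_on \<sigma> {..<n}"
  shows "Esg n \<sigma> = (-1) ^ inversions n \<sigma>"
proof -
  have "Esg n \<sigma> = (\<Prod>p\<in>Ppairs n. if \<sigma> (snd p) < \<sigma> (fst p) then -1 else 1)"
    unfolding Esg_def
  proof (rule prod.cong[OF refl])
    fix p assume "p \<in> Ppairs n"
    then obtain i j where p: "p = (i,j)" "i < j" "j < n" by (auto simp: Ppairs_def)
    then have "\<sigma> i \<noteq> \<sigma> j" using assms unfolding inj_on_def by fastforce
    then show "sgn (int (\<sigma> (snd p)) - int (\<sigma> (fst p))) = (if \<sigma> (snd p) < \<sigma> (fst p) then -1 else 1)"
      using p by (auto simp: sgn_if)
  qed
  also have "\<dots> = (\<Prod>p\<in>Ppairs n \<inter> {p. \<sigma> (snd p) < \<sigma> (fst p)}. -1) * (\<Prod>p\<in>Ppairs n \<inter> - {p. \<sigma> (snd p) < \<sigma> (fst p)}. 1)"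
    by (rule prod.If_cases[OF finite_Ppairs])
  also have "Ppairs n \<inter> {p. \<sigma> (snd p) < \<sigma> (fst p)} = {(i, j). i < j \<and> j < n \<and> \<sigma> j < \<sigma> i}"
    by (auto simp: Ppairs_def)
  finally show ?thesis by (simp add: inversions_def)
qed

lemma Esg_comp:
  assumes s: "\<sigma> permutes {..<n}" and t: "\<tau> permutes {..<n}"
  shows "Esg n (\<sigma> \<circ> \<tau>) = Esg n \<sigma> * Esg n \<tau>"
proof -
  define h where "h = (\<lambda>p. (min (\<tau> (fst p)) (\<tau> (snd p)), max (\<tau> (fst p)) (\<tau> (snd p))))"
  define g where "g = (\<lambda>p. sgn (int (\<sigma> (snd p)) - int (\<sigma> (fst p))))"
  have tinj: "inj \<tau>" using t permutes_inj by blast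
  have tlt: "\<tau> i < n \<longleftrightarrow> i < n" for i using permutes_in_image[OF t] by simp
  have hinj: "inj_on h (Ppairs n)"
  proof (rule inj_onI)
    fix p q assume "p \<in> Ppairs n" "q \<in> Ppairs n" "h p = h q"
    then obtain i j i' j' where pq: "p = (i,j)" "q = (i',j')" "i < j" "i' < j'"
      by (auto simp: Ppairs_def)
    have e: "min (\<tau> i) (\<tau> j) = min (\<tau> i') (\<tau> j')" "max (\<tau> i) (\<tau> j) = max (\<tau> i') (\<tau> j')"
      using \<open>h p = h q\<close> unfolding pq h_def by simp_all
    have "(\<tau> i = \<tau> i' \<and> \<tau> j = \<tau> j') \<or> (\<tau> i = \<tau> j' \<and> \<tau> j = \<tau> i')"
      using e by (cases "\<tau> i \<le> \<tau> j"; cases "\<tau> i' \<le> \<tau> j'") (simp_all add: min_def max_def)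
    then have "(i = i' \<and> j = j') \<or> (i = j' \<and> j = i')" using tinj by (auto simp: inj_eq)
    then show "p = q" using pq by auto
  qed
  have himg: "h ` Ppairs n = Ppairs n"
  proof
    show "h ` Ppairs n \<subseteq> Ppairs n"
    proof
      fix x assume "x \<in> h ` Ppairs n"
      then obtain i j where x: "x = h (i,j)" "i < j" "j < n" by (auto simp: Ppairs_def)
      then have "\<tau> i \<noteq> \<tau> j" using tinj by (auto simp: inj_eq)
      then show "x \<in> Ppairs n" using x tlt[of i] tlt[of j] by (cases "\<tau> i < \<tau> j") (simp_all add: h_def Ppairs_def min_def max_def)
    qed
  next
    show "Ppairs n \<subseteq> h ` Ppairs n"
    proof
      fix x assume "x \<in> Ppairs n"
      then obtain a b where x: "x = (a,b)" "a < b" "b < n" by (auto simp: Ppairs_def)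
      define i0 where "i0 = inv \<tau> a"
      define j0 where "j0 = inv \<tau> b"
      have ta: "\<tau> i0 = a" "\<tau> j0 = b" unfolding i0_def j0_def using permutes_inverses(1)[OF t] by auto
      have lt: "i0 < n" "j0 < n" using ta tlt[of i0] tlt[of j0] x by auto
      have ne: "i0 \<noteq> j0" using ta x by auto
      have "x = h (min i0 j0, max i0 j0)" using ta x ne by (cases "i0 < j0") (simp_all add: h_def min_def max_def)
      moreover have "(min i0 j0, max i0 j0) \<in> Ppairs n" using lt ne by (auto simp: Ppairs_def min_def max_def)
      ultimately show "x \<in> h ` Ppairs n" by blast
    qed
  qed
  have split: "sgn (int ((\<sigma> \<circ> \<tau>) (snd p)) - int ((\<sigma> \<circ> \<tau>) (fst p))) = g (h p) * sgn (int (\<tau> (snd p)) - int (\<tau> (fst p)))"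
    if "p \<in> Ppairs n" for p
  proof -
    obtain i j where p0: "p = (i,j)" by (cases p)
    have p: "p = (i,j)" "i < j" using that p0 by (simp_all add: Ppairs_def)
    then have "\<tau> i \<noteq> \<tau> j" using tinj by (auto simp: inj_eq)
    then show ?thesis using p
      by (cases "\<tau> i < \<tau> j") (simp_all add: g_def h_def min_def max_def sgn_if)
  qed
  have "Esg n (\<sigma> \<circ> \<tau>) = (\<Prod>p\<in>Ppairs n. g (h p) * sgn (int (\<tau> (snd p)) - int (\<tau> (fst p))))"
    unfolding Esg_def using split by (rule prod.cong[OF refl])
  also have "\<dots> = (\<Prod>p\<in>Ppairs n. g (h p)) * Esg n \<tau>"
    by (simp add: prod.distrib Esg_def)
  also have "(\<Prod>p\<in>Ppairs n. g (h p)) = prod g (h ` Ppairs n)"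
    using prod.reindex[OF hinj, of g] by simp
  also have "\<dots> = Esg n \<sigma>" using himg by (simp add: Esg_def g_def)
  finally show ?thesis .
qed

lemma Esg_adj:
  assumes "Suc a < n"
  shows "Esg n (Transposition.transpose a (Suc a)) = -1"
proof -
  have "{(i, j). i < j \<and> j < n \<and> Transposition.transpose a (Suc a) j < Transposition.transpose a (Suc a) i} = {(a, Suc a)}"
    using assms by (auto simp: Transposition.transpose_def split: if_splits)
  moreover have "inj_on (Transposition.transpose a (Suc a)) {..<n}" by simp
  ultimately show ?thesis using Esg_inv by (simp add: inversions_def)
qed

lemma Esg_transp:
  assumes "a < b" "b < n"
  shows "Esg n (Transposition.transpose a b) = -1"
  using assms
proof (induction b)
  case 0 then show ?case by simp
next
  case (Suc b)
  show ?case
  proof (cases "a = b")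
    case True then show ?thesis using Esg_adj Suc by simp
  next
    case False
    then have ab: "a < b" using Suc by simp
    have eq: "Transposition.transpose a (Suc b) = Transposition.transpose b (Suc b) \<circ> Transposition.transpose a b \<circ> Transposition.transpose b (Suc b)"
      using ab by (auto simp: Transposition.transpose_def fun_eq_iff)
    have p1: "Transposition.transpose b (Suc b) permutes {..<n}" using Suc by (intro permutes_swap_id) auto
    have p2: "Transposition.transpose a b permutes {..<n}" using Suc ab by (intro permutes_swap_id) auto
    have "Esg n (Transposition.transpose a (Suc b)) = Esg n (Transposition.transpose b (Suc b)) * Esg n (Transposition.transpose a b) * Esg n (Transposition.transpose b (Suc b))"
      unfolding eq using p1 p2 by (simp add: Esg_comp permutes_compose)
    then show ?thesis using Suc.IH[OF ab] Suc.prems Esg_adj[of b n] by simp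
  qed
qed




definition eps :: "nat \<Rightarrow> (nat \<Rightarrow> nat) \<Rightarrow> int poly" where
  "eps n \<sigma> = (-1) ^ inversions n \<sigma>"

lemma Sn_iff: "\<sigma> \<in> Sn n \<longleftrightarrow> \<sigma> permutes {..<n}"
  by (simp add: Sn_def atLeast0LessThan)

lemma finite_Sn: "finite (Sn n)"
  unfolding Sn_def by (rule finite_permutations) simp

lemma eps_Esg: "\<sigma> permutes {..<n} \<Longrightarrow> eps n \<sigma> = of_int (Esg n \<sigma>)"
  unfolding eps_def using Esg_inv[of \<sigma> n] permutes_inj_on[of \<sigma> "{..<n}" "{..<n}"]
  by simp

lemma eps_comp:
  assumes "\<sigma> \<in> Sn n" "\<tau> \<in> Sn n"
  shows "eps n (\<sigma> \<circ> \<tau>) = eps n \<sigma> * eps n \<tau>"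
  using assms by (simp add: Sn_iff eps_Esg permutes_compose Esg_comp)

lemma eps_transp:
  assumes "a \<noteq> b" "a < n" "b < n"
  shows "eps n (Transposition.transpose a b) = -1"
proof -
  have p: "Transposition.transpose a b permutes {..<n}" using assms by (intro permutes_swap_id) auto
  show ?thesis
  proof (cases "a < b")
    case True then show ?thesis using p assms by (simp add: eps_Esg Esg_transp)
  next
    case False
    then have "b < a" using assms by simp
    moreover have "Transposition.transpose a b = Transposition.transpose b a" by (rule transpose_commute)
    ultimately show ?thesis using p assms Esg_transp[of b a n] by (simp add: eps_Esg)
  qed
qed

lemma eps_sq: "\<sigma> \<in> Sn n \<Longrightarrow> eps n \<sigma> * eps n \<sigma> = 1"
  unfolding eps_def by (simp add: power_mult_distrib[symmetric])

definition Zs :: "nat \<Rightarrow> zvec set" where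
  "Zs n = {v. \<forall>i\<ge>n. v i = 0}"

lemma inv_perm_lt: "(\<sigma>::nat\<Rightarrow>nat) permutes {..<n} \<Longrightarrow> inv \<sigma> i < n \<longleftrightarrow> i < n"
  using permutes_in_image[OF permutes_inv, of \<sigma> "{..<n}" i] by simp

lemma perm_lt: "(\<sigma>::nat\<Rightarrow>nat) permutes {..<n} \<Longrightarrow> \<sigma> i < n \<longleftrightarrow> i < n"
  using permutes_in_image[of \<sigma> "{..<n}" i] by simp

lemma inv_perm_ge:
  assumes "(\<sigma>::nat\<Rightarrow>nat) permutes {..<n}" "n \<le> i" shows "inv \<sigma> i = i"
proof -
  have "i \<notin> {..<n}" using assms(2) by simp
  then show ?thesis using permutes_not_in[OF permutes_inv[OF assms(1)]] by blast
qed

lemma pact_apply: "pact \<sigma> \<beta> i = \<beta> (inv \<sigma> i)"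
  by (simp add: pact_def)

lemma vadd_apply[simp]: "vadd a b i = a i + b i" by (simp add: vadd_def)
lemma vsub_apply[simp]: "vsub a b i = a i - b i" by (simp add: vsub_def)

lemma pact_comp:
  assumes "\<sigma> permutes {..<n}" "\<tau> permutes {..<n}"
  shows "pact \<sigma> (pact \<tau> \<beta>) = pact (\<sigma> \<circ> \<tau>) \<beta>"
  using assms by (simp add: pact_def o_inv_distrib permutes_bij o_assoc)

lemma pact_vadd: "pact \<sigma> (vadd a b) = vadd (pact \<sigma> a) (pact \<sigma> b)"
  by (simp add: pact_def vadd_def fun_eq_iff)

lemma pact_vsub: "pact \<sigma> (vsub a b) = vsub (pact \<sigma> a) (pact \<sigma> b)"
  by (simp add: pact_def vsub_def fun_eq_iff)

lemma pact_id: "pact id \<beta> = \<beta>"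
  by (simp add: pact_def)

lemma dotact_comp:
  assumes "\<sigma> permutes {..<n}" "\<tau> permutes {..<n}"
  shows "dotact n \<sigma> (dotact n \<tau> \<beta>) = dotact n (\<sigma> \<circ> \<tau>) \<beta>"
proof -
  have "vadd (dotact n \<tau> \<beta>) (rho n) = pact \<tau> (vadd \<beta> (rho n))"
    by (simp add: dotact_def fun_eq_iff)
  then show ?thesis using assms by (simp add: dotact_def pact_comp)
qed

lemma wt_pact: "\<sigma> permutes {..<n} \<Longrightarrow> wt n (pact \<sigma> \<beta>) = wt n \<beta>"
  unfolding wt_def pact_def using sum.permute[OF permutes_inv, of \<sigma> "{..<n}" \<beta>] by simp

lemma wt_vadd: "wt n (vadd a b) = wt n a + wt n b"
  by (simp add: wt_def sum.distrib)

lemma wt_vsub: "wt n (vsub a b) = wt n a - wt n b"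
  by (simp add: wt_def sum_subtractf)

lemma wt_dotact: "\<sigma> permutes {..<n} \<Longrightarrow> wt n (dotact n \<sigma> \<beta>) = wt n \<beta>"
  by (simp add: dotact_def wt_vsub wt_pact wt_vadd)

lemma Zs_pact: "\<beta> \<in> Zs n \<Longrightarrow> \<sigma> permutes {..<n} \<Longrightarrow> pact \<sigma> \<beta> \<in> Zs n"
  by (simp add: Zs_def pact_def inv_perm_ge)

lemma rho_Zs: "rho n \<in> Zs n" by (simp add: Zs_def rho_def)

lemma Zs_vadd: "a \<in> Zs n \<Longrightarrow> b \<in> Zs n \<Longrightarrow> vadd a b \<in> Zs n" by (simp add: Zs_def)
lemma Zs_vsub: "a \<in> Zs n \<Longrightarrow> b \<in> Zs n \<Longrightarrow> vsub a b \<in> Zs n" by (simp add: Zs_def)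

lemma Zs_dotact: "\<beta> \<in> Zs n \<Longrightarrow> \<sigma> permutes {..<n} \<Longrightarrow> dotact n \<sigma> \<beta> \<in> Zs n"
  unfolding dotact_def by (intro Zs_vsub Zs_pact Zs_vadd rho_Zs) auto

lemma Zs_eqI: "a \<in> Zs n \<Longrightarrow> b \<in> Zs n \<Longrightarrow> (\<And>i. i < n \<Longrightarrow> a i = b i) \<Longrightarrow> a = b"
proof (rule ext)
  fix i assume "a \<in> Zs n" "b \<in> Zs n" "\<And>i. i < n \<Longrightarrow> a i = b i"
  then show "a i = b i" unfolding Zs_def by (cases "i < n") auto
qed

lemma mults_lin:
  assumes "finite R" "m \<in> mults n R w"
  shows "(\<Sum>i<n. w i * f i) = (\<Sum>\<alpha>\<in>R. int (m \<alpha>) * (\<Sum>i<n. \<alpha> i * f i))"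
proof -
  have "(\<Sum>i<n. w i * f i) = (\<Sum>i<n. (\<Sum>\<alpha>\<in>R. int (m \<alpha>) * \<alpha> i) * f i)"
    using assms(2) by (simp add: mults_def)
  also have "\<dots> = (\<Sum>i<n. \<Sum>\<alpha>\<in>R. int (m \<alpha>) * (\<alpha> i * f i))"
    by (simp add: sum_distrib_right mult.assoc)
  also have "\<dots> = (\<Sum>\<alpha>\<in>R. \<Sum>i<n. int (m \<alpha>) * (\<alpha> i * f i))"
    by (rule sum.swap)
  also have "\<dots> = (\<Sum>\<alpha>\<in>R. int (m \<alpha>) * (\<Sum>i<n. \<alpha> i * f i))"
    by (simp add: sum_distrib_left)
  finally show ?thesis .
qed

lemma mults_wt:
  assumes "finite R" "m \<in> mults n R w"
  shows "wt n w = (\<Sum>\<alpha>\<in>R. int (m \<alpha>) * wt n \<alpha>)"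
  using mults_lin[OF assms, of "\<lambda>_. 1"] by (simp add: wt_def)

lemma finite_mults:
  assumes "finite R" and pos: "\<And>\<alpha>. \<alpha> \<in> R \<Longrightarrow> (\<Sum>i<n. \<alpha> i * rho n i) \<ge> 1"
  shows "finite (mults n R w)"
proof -
  define N where "N = nat (\<Sum>i<n. w i * rho n i)"
  have "mults n R w \<subseteq> {m. \<forall>\<alpha>. (\<alpha> \<in> R \<longrightarrow> m \<alpha> \<in> {..N}) \<and> (\<alpha> \<notin> R \<longrightarrow> m \<alpha> = 0)}"
  proof
    fix m assume m: "m \<in> mults n R w"
    have bound: "m \<alpha> \<le> N" if a: "\<alpha> \<in> R" for \<alpha>
    proof -
      have eq: "(\<Sum>i<n. w i * rho n i) = (\<Sum>\<beta>\<in>R. int (m \<beta>) * (\<Sum>i<n. \<beta> i * rho n i))"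
        by (rule mults_lin[OF assms(1) m])
      have "int (m \<alpha>) \<le> int (m \<alpha>) * (\<Sum>i<n. \<alpha> i * rho n i)"
        using pos[OF a] by (simp add: mult_le_cancel_left1)
      also have "\<dots> \<le> (\<Sum>\<beta>\<in>R. int (m \<beta>) * (\<Sum>i<n. \<beta> i * rho n i))"
      proof (rule member_le_sum[OF a _ assms(1)])
        fix x assume "x \<in> R - {\<alpha>}"
        then have "1 \<le> (\<Sum>i<n. x i * rho n i)" using pos by blast
        then show "0 \<le> int (m x) * (\<Sum>i<n. x i * rho n i)" by simp
      qed
      finally show "m \<alpha> \<le> N" using eq by (simp add: N_def)
    qed
    show "m \<in> {m. \<forall>\<alpha>. (\<alpha> \<in> R \<longrightarrow> m \<alpha> \<in> {..N}) \<and> (\<alpha> \<notin> R \<longrightarrow> m \<alpha> = 0)}"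
      using bound m by (auto simp: mults_def)
  qed
  moreover have "finite {m. \<forall>\<alpha>. (\<alpha> \<in> R \<longrightarrow> m \<alpha> \<in> {..N}) \<and> (\<alpha> \<notin> R \<longrightarrow> m \<alpha> = 0)}"
    by (rule finite_set_of_finite_funs) (use assms(1) in auto)
  ultimately show ?thesis by (rule finite_subset)
qed

lemma qpart_nonzero:
  assumes "finite (mults n R w)" "mults n R w \<noteq> {}"
  shows "qpart n R w \<noteq> 0"
proof -
  have "poly (qpart n R w) 1 = of_nat (card (mults n R w))"
    unfolding qpart_def by (simp add: poly_sum poly_monom)
  moreover have "card (mults n R w) \<noteq> 0" using assms by simp
  ultimately show ?thesis by (metis of_nat_eq_0_iff poly_0)
qed

lemma qpart_zero: "mults n R w = {} \<Longrightarrow> qpart n R w = 0"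
  by (simp add: qpart_def)




lemma unitv_Zs: "i < n \<Longrightarrow> unitv i \<in> Zs n"
  by (simp add: Zs_def unitv_def)

lemma wt_unitv: "i < n \<Longrightarrow> wt n (unitv i) = 1"
  unfolding wt_def unitv_def by (simp add: sum.delta)

lemma lin_unitv: "i < n \<Longrightarrow> (\<Sum>k<n. unitv i k * f k) = f i"
proof -
  assume i: "i < n"
  have "(\<Sum>k<n. unitv i k * f k) = (\<Sum>k<n. if k = i then f k else 0)"
    by (rule sum.cong) (auto simp: unitv_def)
  then show ?thesis using i by (simp add: sum.delta)
qed

lemma pact_cancel:
  assumes t: "\<tau> permutes {..<n}"
  shows "pact (inv \<tau>) (pact \<tau> \<alpha>) = \<alpha>" "pact \<tau> (pact (inv \<tau>) \<alpha>) = \<alpha>"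
  by (simp_all add: pact_def fun_eq_iff permutes_inv_inv[OF t] permutes_inverses[OF t])

lemma pact_unitv:
  assumes "\<tau> permutes {..<n}"
  shows "pact \<tau> (unitv r) = unitv (\<tau> r)"
  using permutes_inv_eq[OF assms] by (auto simp: pact_def unitv_def fun_eq_iff)

definition LongSet :: "nat \<Rightarrow> zvec set \<Rightarrow> bool" where
  "LongSet n L \<longleftrightarrow> L \<subseteq> longC n \<and> (\<forall>\<tau>. \<tau> permutes {..<n} \<longrightarrow> (\<forall>\<alpha>\<in>L. pact \<tau> \<alpha> \<in> L))"

lemma finite_rootsA: "finite (rootsA n)"
proof (rule finite_subset)
  show "rootsA n \<subseteq> (\<lambda>p. vsub (unitv (fst p)) (unitv (snd p))) ` ({..<n} \<times> {..<n})"
    unfolding rootsA_def by force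
qed simp

lemma finite_longC: "finite (longC n)"
proof (rule finite_subset)
  show "longC n \<subseteq> (\<lambda>p. vadd (unitv (fst p)) (unitv (snd p))) ` ({..<n} \<times> {..<n})"
    unfolding longC_def by force
qed simp

lemma rootsA_props:
  assumes "\<alpha> \<in> rootsA n"
  shows "\<alpha> \<in> Zs n" "wt n \<alpha> = 0" "(\<Sum>k<n. \<alpha> k * rho n k) \<ge> 1"
proof -
  obtain i j where a: "\<alpha> = vsub (unitv i) (unitv j)" "i < j" "j < n"
    using assms by (auto simp: rootsA_def)
  show "\<alpha> \<in> Zs n" using a by (auto intro!: Zs_vsub unitv_Zs)
  show "wt n \<alpha> = 0" using a by (simp add: wt_vsub wt_unitv)
  have "(\<Sum>k<n. \<alpha> k * rho n k) = (\<Sum>k<n. unitv i k * rho n k) - (\<Sum>k<n. unitv j k * rho n k)"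
    using a by (simp add: left_diff_distrib sum_subtractf)
  also have "\<dots> = rho n i - rho n j" using a by (simp add: lin_unitv)
  finally show "(\<Sum>k<n. \<alpha> k * rho n k) \<ge> 1" using a by (simp add: rho_def)
qed

lemma longC_props:
  assumes "\<alpha> \<in> longC n"
  shows "\<alpha> \<in> Zs n" "wt n \<alpha> = 2" "(\<Sum>k<n. \<alpha> k * rho n k) \<ge> 1" "\<And>k. \<alpha> k \<ge> 0"
proof -
  obtain r s where a: "\<alpha> = vadd (unitv r) (unitv s)" "r \<le> s" "s < n"
    using assms by (auto simp: longC_def)
  show "\<alpha> \<in> Zs n" using a by (auto intro!: Zs_vadd unitv_Zs)
  show "wt n \<alpha> = 2" using a by (simp add: wt_vadd wt_unitv)
  have "(\<Sum>k<n. \<alpha> k * rho n k) = (\<Sum>k<n. unitv r k * rho n k) + (\<Sum>k<n. unitv s k * rho n k)"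
    using a by (simp add: distrib_right sum.distrib)
  also have "\<dots> = rho n r + rho n s" using a by (simp add: lin_unitv)
  finally show "(\<Sum>k<n. \<alpha> k * rho n k) \<ge> 1" using a by (simp add: rho_def)
  show "\<And>k. \<alpha> k \<ge> 0" using a by (simp add: unitv_def)
qed

lemma LongSet_longC: "LongSet n (longC n)"
  unfolding LongSet_def
proof (intro conjI allI impI ballI subset_refl)
  fix \<tau> \<alpha> assume t: "\<tau> permutes {..<n}" and "\<alpha> \<in> longC n"
  then obtain r s where a: "\<alpha> = vadd (unitv r) (unitv s)" "r \<le> s" "s < n"
    by (auto simp: longC_def)
  have p: "pact \<tau> \<alpha> = vadd (unitv (\<tau> r)) (unitv (\<tau> s))"
    using a t by (simp add: pact_vadd pact_unitv)
  have lt: "\<tau> r < n" "\<tau> s < n" using a perm_lt[OF t] by auto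
  show "pact \<tau> \<alpha> \<in> longC n"
  proof (cases "\<tau> r \<le> \<tau> s")
    case True then show ?thesis using p lt unfolding longC_def by blast
  next
    case False
    have "pact \<tau> \<alpha> = vadd (unitv (\<tau> s)) (unitv (\<tau> r))" using p by (simp add: vadd_def add.commute)
    then show ?thesis using False lt unfolding longC_def by force
  qed
qed

lemma LongSet_longD: "LongSet n (longD n)"
  unfolding LongSet_def
proof (intro conjI allI impI ballI)
  show "longD n \<subseteq> longC n" unfolding longD_def longC_def by force
  fix \<tau> \<alpha> assume t: "\<tau> permutes {..<n}" and "\<alpha> \<in> longD n"
  then obtain r s where a: "\<alpha> = vadd (unitv r) (unitv s)" "r < s" "s < n"
    by (auto simp: longD_def)
  have p: "pact \<tau> \<alpha> = vadd (unitv (\<tau> r)) (unitv (\<tau> s))"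
    using a t by (simp add: pact_vadd pact_unitv)
  have lt: "\<tau> r < n" "\<tau> s < n" using a perm_lt[OF t] by auto
  have ne: "\<tau> r \<noteq> \<tau> s" using a permutes_inj[OF t] by (auto simp: inj_eq)
  show "pact \<tau> \<alpha> \<in> longD n"
  proof (cases "\<tau> r < \<tau> s")
    case True then show ?thesis using p lt unfolding longD_def by blast
  next
    case False
    have "pact \<tau> \<alpha> = vadd (unitv (\<tau> s)) (unitv (\<tau> r))" using p by (simp add: vadd_def add.commute)
    then show ?thesis using False ne lt unfolding longD_def by force
  qed
qed

context
  fixes n :: nat and L :: "zvec set"
  assumes LS: "LongSet n L"
begin

lemma LS_sub: "L \<subseteq> longC n" using LS by (simp add: LongSet_def)

lemma LS_finite: "finite L" using LS_sub finite_longC by (rule finite_subset)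

lemma LS_props:
  assumes "\<alpha> \<in> L"
  shows "\<alpha> \<in> Zs n" "wt n \<alpha> = 2" "(\<Sum>k<n. \<alpha> k * rho n k) \<ge> 1" "\<And>k. \<alpha> k \<ge> 0"
  using longC_props[of \<alpha> n] assms LS_sub by auto

lemma LS_disj: "rootsA n \<inter> L = {}"
  using LS_props(2) rootsA_props(2) by fastforce

lemma LS_fin_mults: "finite (mults n L w)"
  by (rule finite_mults[OF LS_finite LS_props(3)])

lemma RL_fin_mults: "finite (mults n (rootsA n \<union> L) w)"
  by (rule finite_mults) (use LS_finite finite_rootsA LS_props(3) rootsA_props(3) in auto)

lemma A_fin_mults: "finite (mults n (rootsA n) w)"
  by (rule finite_mults[OF finite_rootsA rootsA_props(3)])

lemma LS_nonneg:
  assumes "m \<in> mults n L w" "i < n" shows "w i \<ge> 0"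
proof -
  have "w i = (\<Sum>\<alpha>\<in>L. int (m \<alpha>) * \<alpha> i)" using assms by (simp add: mults_def)
  also have "\<dots> \<ge> 0" using LS_props(4) by (intro sum_nonneg) simp
  finally show ?thesis .
qed

lemma LS_qpart:
  "qpart n L w = smult (int (card (mults n L w))) (monom 1 (nat (wt n w div 2)))"
proof -
  have "qpart n L w = (\<Sum>m\<in>mults n L w. monom 1 (nat (wt n w div 2)))"
    unfolding qpart_def
  proof (rule sum.cong[OF refl])
    fix m assume m: "m \<in> mults n L w"
    have "wt n w = (\<Sum>\<alpha>\<in>L. int (m \<alpha>) * 2)"
      using mults_wt[OF LS_finite m] LS_props(2) by simp
    also have "\<dots> = 2 * int (\<Sum>\<alpha>\<in>L. m \<alpha>)" by (simp add: sum_distrib_right[symmetric] mult.commute)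
    finally have e: "wt n w = 2 * int (\<Sum>\<alpha>\<in>L. m \<alpha>)" .
    obtain S where S: "S = (\<Sum>\<alpha>\<in>L. m \<alpha>)" by blast
    have "nat (wt n w div 2) = S" using e unfolding S[symmetric] by simp
    then show "monom 1 (\<Sum>\<alpha>\<in>L. m \<alpha>) = monom 1 (nat (wt n w div 2))" using S by simp
  qed
  also have "\<dots> = smult (int (card (mults n L w))) (monom 1 (nat (wt n w div 2)))"
    by (simp add: smult_monom of_nat_monom mult_monom)
  finally show ?thesis .
qed

lemma LS_pact_mem:
  assumes "\<tau> permutes {..<n}" "\<alpha> \<in> L" shows "pact \<tau> \<alpha> \<in> L"
  using LS assms by (simp add: LongSet_def)

lemma LS_bij:
  assumes t: "\<tau> permutes {..<n}" shows "bij_betw (pact \<tau>) L L"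
proof -
  have inv1: "pact (inv \<tau>) (pact \<tau> \<alpha>) = \<alpha>" for \<alpha>
    using pact_cancel[OF t] by simp
  have inv2: "pact \<tau> (pact (inv \<tau>) \<alpha>) = \<alpha>" for \<alpha>
    using pact_cancel[OF t] by simp
  show ?thesis
  proof (rule bij_betw_byWitness[where f' = "pact (inv \<tau>)"])
    show "\<forall>a\<in>L. pact (inv \<tau>) (pact \<tau> a) = a" using inv1 by simp
    show "\<forall>a'\<in>L. pact \<tau> (pact (inv \<tau>) a') = a'" using inv2 by simp
    show "pact \<tau> ` L \<subseteq> L" using LS_pact_mem[OF t] by auto
    show "pact (inv \<tau>) ` L \<subseteq> L" using LS_pact_mem[OF permutes_inv[OF t]] by auto
  qed
qed

lemma LS_mults_map:
  assumes t: "\<tau> permutes {..<n}" and m: "m \<in> mults n L w"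
  shows "m \<circ> pact \<tau> \<in> mults n L (pact (inv \<tau>) w)"
  unfolding mults_def
proof (intro CollectI conjI allI impI)
  fix \<alpha> assume a: "\<alpha> \<notin> L"
  have "pact \<tau> \<alpha> \<notin> L"
  proof
    assume "pact \<tau> \<alpha> \<in> L"
    then have "pact (inv \<tau>) (pact \<tau> \<alpha>) \<in> L" using LS_pact_mem[OF permutes_inv[OF t]] by blast
    then show False using a pact_cancel[OF t] by simp
  qed
  then show "(m \<circ> pact \<tau>) \<alpha> = 0" using m by (simp add: mults_def)
next
  fix i assume i: "i < n"
  have ti: "\<tau> i < n" using perm_lt[OF t] i by simp
  have "(\<Sum>\<alpha>\<in>L. int ((m \<circ> pact \<tau>) \<alpha>) * \<alpha> i) = (\<Sum>\<alpha>\<in>L. int (m (pact \<tau> \<alpha>)) * (pact (inv \<tau>) (pact \<tau> \<alpha>)) i)"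
    using pact_cancel[OF t] by simp
  also have "\<dots> = (\<Sum>\<beta>\<in>L. int (m \<beta>) * (pact (inv \<tau>) \<beta>) i)"
    by (rule sum.reindex_bij_betw[OF LS_bij[OF t], where g = "\<lambda>\<beta>. int (m \<beta>) * (pact (inv \<tau>) \<beta>) i"])
  also have "\<dots> = (\<Sum>\<beta>\<in>L. int (m \<beta>) * \<beta> (\<tau> i))"
    using t by (simp add: pact_def permutes_inv_inv)
  also have "\<dots> = w (\<tau> i)" using m ti by (simp add: mults_def)
  also have "\<dots> = pact (inv \<tau>) w i" using t by (simp add: pact_def permutes_inv_inv)
  finally show "(\<Sum>\<alpha>\<in>L. int ((m \<circ> pact \<tau>) \<alpha>) * \<alpha> i) = pact (inv \<tau>) w i" .
qed

lemma LS_qpart_pact: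
  assumes t: "\<tau> permutes {..<n}"
  shows "qpart n L (pact \<tau> w) = qpart n L w"
  unfolding qpart_def
proof (rule sum.reindex_bij_witness[where j = "\<lambda>m. m \<circ> pact \<tau>" and i = "\<lambda>m. m \<circ> pact (inv \<tau>)"])
  have c1: "pact \<tau> (pact (inv \<tau>) \<alpha>) = \<alpha>" for \<alpha>
    using pact_cancel[OF t] by simp
  have c2: "pact (inv \<tau>) (pact \<tau> \<alpha>) = \<alpha>" for \<alpha>
    using pact_cancel[OF t] by simp
  have ww: "pact (inv \<tau>) (pact \<tau> w) = w"
    using pact_cancel[OF t] by simp
  have ww2: "pact (inv (inv \<tau>)) w = pact \<tau> w" using t by (simp add: permutes_inv_inv)
  fix a :: "zvec \<Rightarrow> nat"
  show "a \<circ> pact \<tau> \<circ> pact (inv \<tau>) = a" by (simp add: comp_def c1)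
  show "a \<in> mults n L (pact \<tau> w) \<Longrightarrow> a \<circ> pact \<tau> \<in> mults n L w"
    using LS_mults_map[OF t, of a "pact \<tau> w"] ww by simp
  show "a \<circ> pact (inv \<tau>) \<circ> pact \<tau> = a" by (simp add: comp_def c2)
  show "a \<in> mults n L w \<Longrightarrow> a \<circ> pact (inv \<tau>) \<in> mults n L (pact \<tau> w)"
    using LS_mults_map[OF permutes_inv[OF t], of a w] ww2 by simp
  show "a \<in> mults n L (pact \<tau> w) \<Longrightarrow> monom 1 (\<Sum>\<alpha>\<in>L. (a \<circ> pact \<tau>) \<alpha>) = monom 1 (\<Sum>\<alpha>\<in>L. a \<alpha>)"
    using sum.reindex_bij_betw[OF LS_bij[OF t], of a] by simp
qed

end




lemma factorization:
  assumes LS: "LongSet n L" and finS: "finite S" and SZ: "S \<subseteq> Zs n"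
    and supp: "\<And>\<delta>. \<delta> \<in> Zs n \<Longrightarrow> qpart n L \<delta> * qpart n (rootsA n) (vsub \<beta> \<delta>) \<noteq> 0 \<Longrightarrow> \<delta> \<in> S"
  shows "qpart n (rootsA n \<union> L) \<beta> = (\<Sum>\<delta>\<in>S. qpart n L \<delta> * qpart n (rootsA n) (vsub \<beta> \<delta>))"
proof -
  define R where "R = rootsA n"
  have finR: "finite R" unfolding R_def by (rule finite_rootsA)
  have finL: "finite L" by (rule LS_finite[OF LS])
  have disj: "R \<inter> L = {}" unfolding R_def by (rule LS_disj[OF LS])
  have LZ: "\<alpha> \<in> L \<Longrightarrow> \<alpha> \<in> Zs n" for \<alpha> using LS_props(1)[OF LS] by blast
  define M where "M = mults n (R \<union> L) \<beta>"
  define SG where "SG = Sigma S (\<lambda>\<delta>. mults n L \<delta> \<times> mults n R (vsub \<beta> \<delta>))"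
  define G where "G = (\<lambda>a::zvec \<times> (zvec \<Rightarrow> nat) \<times> (zvec \<Rightarrow> nat). monom (1::int) ((\<Sum>\<alpha>\<in>L. fst (snd a) \<alpha>) + (\<Sum>\<alpha>\<in>R. snd (snd a) \<alpha>)))"
  define H where "H = (\<lambda>m. monom (1::int) (\<Sum>\<alpha>\<in>R \<union> L. m \<alpha>))"
  define dl where "dl = (\<lambda>m::zvec \<Rightarrow> nat. (\<lambda>k. \<Sum>\<alpha>\<in>L. int (m \<alpha>) * \<alpha> k))"
  define jj where "jj = (\<lambda>a::zvec \<times> (zvec \<Rightarrow> nat) \<times> (zvec \<Rightarrow> nat). (\<lambda>\<alpha>. fst (snd a) \<alpha> + snd (snd a) \<alpha>))"
  define ii where "ii = (\<lambda>m::zvec \<Rightarrow> nat. (dl m, (\<lambda>\<alpha>. if \<alpha> \<in> L then m \<alpha> else 0), (\<lambda>\<alpha>. if \<alpha> \<in> R then m \<alpha> else 0)))"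
  have finML: "finite (mults n L \<delta>)" for \<delta> by (rule LS_fin_mults[OF LS])
  have finMR: "finite (mults n R \<delta>)" for \<delta> unfolding R_def by (rule A_fin_mults[OF LS])
  have "(\<Sum>\<delta>\<in>S. qpart n L \<delta> * qpart n R (vsub \<beta> \<delta>))
      = (\<Sum>\<delta>\<in>S. \<Sum>p\<in>mults n L \<delta> \<times> mults n R (vsub \<beta> \<delta>). G (\<delta>, p))"
  proof (rule sum.cong[OF refl])
    fix \<delta> assume "\<delta> \<in> S"
    show "qpart n L \<delta> * qpart n R (vsub \<beta> \<delta>) = (\<Sum>p\<in>mults n L \<delta> \<times> mults n R (vsub \<beta> \<delta>). G (\<delta>, p))"
      unfolding qpart_def sum_product sum.cartesian_product G_def
      by (rule sum.cong[OF refl]) (auto simp: mult_monom)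
  qed
  also have "\<dots> = sum G SG"
    unfolding SG_def by (subst sum.Sigma) (use finS finML finMR in auto)
  also have "\<dots> = sum H M"
  proof (rule sum.reindex_bij_witness[where i = ii and j = jj])
    fix a assume a: "a \<in> SG"
    then obtain \<delta> mL mR where a': "a = (\<delta>, mL, mR)" "\<delta> \<in> S" "mL \<in> mults n L \<delta>" "mR \<in> mults n R (vsub \<beta> \<delta>)"
      unfolding SG_def by auto
    have mL0: "\<alpha> \<notin> L \<Longrightarrow> mL \<alpha> = 0" for \<alpha> using a' by (simp add: mults_def)
    have mR0: "\<alpha> \<notin> R \<Longrightarrow> mR \<alpha> = 0" for \<alpha> using a' by (simp add: mults_def)
    have dZ: "\<delta> \<in> Zs n" using a' SZ by blast
    have sL: "(\<Sum>\<alpha>\<in>L. int (mL \<alpha> + mR \<alpha>) * \<alpha> k) = (\<Sum>\<alpha>\<in>L. int (mL \<alpha>) * \<alpha> k)" for k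
    proof (rule sum.cong[OF refl])
      fix x assume "x \<in> L"
      then have "mR x = 0" using disj mR0 by blast
      then show "int (mL x + mR x) * x k = int (mL x) * x k" by simp
    qed
    have "dl (jj a) = \<delta>"
    proof (rule Zs_eqI)
      show "\<delta> \<in> Zs n" by (rule dZ)
      show "dl (jj a) \<in> Zs n" using LZ unfolding Zs_def dl_def by (auto intro!: sum.neutral)
      fix k assume "k < n"
      then show "dl (jj a) k = \<delta> k" using a' sL unfolding dl_def jj_def by (simp add: mults_def)
    qed
    moreover have "(\<lambda>\<alpha>. if \<alpha> \<in> L then jj a \<alpha> else 0) = mL"
      using a' mL0 mR0 disj unfolding jj_def by (auto simp: fun_eq_iff)
    moreover have "(\<lambda>\<alpha>. if \<alpha> \<in> R then jj a \<alpha> else 0) = mR"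
      using a' mL0 mR0 disj unfolding jj_def by (auto simp: fun_eq_iff)
    ultimately show "ii (jj a) = a" using a' unfolding ii_def by simp
    show "jj a \<in> M"
      unfolding M_def mults_def
    proof (intro CollectI conjI allI impI)
      fix \<alpha> assume "\<alpha> \<notin> R \<union> L" then show "jj a \<alpha> = 0" using a' mL0 mR0 unfolding jj_def by simp
    next
      fix k assume k: "k < n"
      have "(\<Sum>\<alpha>\<in>R \<union> L. int (jj a \<alpha>) * \<alpha> k)
          = (\<Sum>\<alpha>\<in>R \<union> L. int (mL \<alpha>) * \<alpha> k) + (\<Sum>\<alpha>\<in>R \<union> L. int (mR \<alpha>) * \<alpha> k)"
        unfolding jj_def using a' by (simp add: distrib_right sum.distrib)
      also have "(\<Sum>\<alpha>\<in>R \<union> L. int (mL \<alpha>) * \<alpha> k) = (\<Sum>\<alpha>\<in>L. int (mL \<alpha>) * \<alpha> k)"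
        by (rule sum.mono_neutral_right) (use finR finL mL0 in auto)
      also have "(\<Sum>\<alpha>\<in>R \<union> L. int (mR \<alpha>) * \<alpha> k) = (\<Sum>\<alpha>\<in>R. int (mR \<alpha>) * \<alpha> k)"
        by (rule sum.mono_neutral_right) (use finR finL mR0 in auto)
      finally show "(\<Sum>\<alpha>\<in>R \<union> L. int (jj a \<alpha>) * \<alpha> k) = \<beta> k"
        using a' k by (simp add: mults_def)
    qed
    have "(\<Sum>\<alpha>\<in>R \<union> L. jj a \<alpha>) = (\<Sum>\<alpha>\<in>R \<union> L. mL \<alpha>) + (\<Sum>\<alpha>\<in>R \<union> L. mR \<alpha>)"
      unfolding jj_def using a' by (simp add: sum.distrib)
    also have "(\<Sum>\<alpha>\<in>R \<union> L. mL \<alpha>) = (\<Sum>\<alpha>\<in>L. mL \<alpha>)"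
      by (rule sum.mono_neutral_right) (use finR finL mL0 in auto)
    also have "(\<Sum>\<alpha>\<in>R \<union> L. mR \<alpha>) = (\<Sum>\<alpha>\<in>R. mR \<alpha>)"
      by (rule sum.mono_neutral_right) (use finR finL mR0 in auto)
    finally show "H (jj a) = G a" unfolding H_def G_def using a' by simp
  next
    fix m assume m: "m \<in> M"
    have m0: "\<alpha> \<notin> R \<union> L \<Longrightarrow> m \<alpha> = 0" for \<alpha> using m by (simp add: M_def mults_def)
    show "jj (ii m) = m" unfolding jj_def ii_def using m0 disj by (auto simp: fun_eq_iff)
    define mL where "mL = (\<lambda>\<alpha>. if \<alpha> \<in> L then m \<alpha> else 0)"
    define mR where "mR = (\<lambda>\<alpha>. if \<alpha> \<in> R then m \<alpha> else 0)"
    have mLm: "mL \<in> mults n L (dl m)"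
      unfolding mults_def mL_def dl_def by simp
    have split: "(\<Sum>\<alpha>\<in>R \<union> L. int (m \<alpha>) * \<alpha> k) = (\<Sum>\<alpha>\<in>R. int (m \<alpha>) * \<alpha> k) + (\<Sum>\<alpha>\<in>L. int (m \<alpha>) * \<alpha> k)" for k
      by (rule sum.union_disjoint) (use finR finL disj in auto)
    have mRm: "mR \<in> mults n R (vsub \<beta> (dl m))"
      unfolding mults_def
    proof (intro CollectI conjI allI impI)
      fix \<alpha> assume "\<alpha> \<notin> R" then show "mR \<alpha> = 0" by (simp add: mR_def)
    next
      fix k assume k: "k < n"
      have "(\<Sum>\<alpha>\<in>R. int (mR \<alpha>) * \<alpha> k) = (\<Sum>\<alpha>\<in>R. int (m \<alpha>) * \<alpha> k)"
        by (rule sum.cong) (auto simp: mR_def)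
      also have "\<dots> = \<beta> k - dl m k"
        using split[of k] m k by (simp add: M_def mults_def dl_def)
      finally show "(\<Sum>\<alpha>\<in>R. int (mR \<alpha>) * \<alpha> k) = vsub \<beta> (dl m) k" by simp
    qed
    have dlZ: "dl m \<in> Zs n" using LZ unfolding Zs_def dl_def by (auto intro!: sum.neutral)
    have "qpart n L (dl m) \<noteq> 0" using mLm finML
      by (metis empty_iff qpart_nonzero)
    moreover have "qpart n R (vsub \<beta> (dl m)) \<noteq> 0" using mRm finMR
      by (metis empty_iff qpart_nonzero)
    ultimately have "qpart n L (dl m) * qpart n R (vsub \<beta> (dl m)) \<noteq> 0" by simp
    then have "dl m \<in> S" using supp[OF dlZ] unfolding R_def by blast
    then show "ii m \<in> SG" unfolding ii_def SG_def using mLm mRm mL_def mR_def by simp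
  qed
  finally show ?thesis unfolding M_def H_def R_def qpart_def by simp
qed




definition sdec :: "nat \<Rightarrow> zvec \<Rightarrow> bool" where
  "sdec n w \<longleftrightarrow> (\<forall>i j. i < j \<longrightarrow> j < n \<longrightarrow> w j < w i)"

lemma sdec_gap:
  assumes "sdec n w" "i \<le> j" "j < n"
  shows "w j \<le> w i - (int j - int i)"
  using assms(2,3)
proof (induction j)
  case 0 then show ?case by simp
next
  case (Suc j)
  show ?case
  proof (cases "i = Suc j")
    case True then show ?thesis by simp
  next
    case False
    then have "i \<le> j" using Suc by simp
    then have "w j \<le> w i - (int j - int i)" using Suc by simp
    moreover have "w (Suc j) < w j" using assms(1) Suc unfolding sdec_def by simp
    ultimately show ?thesis by simp
  qed
qed

lemma Ptilde_sdec: "\<gamma> \<in> Ptilde n \<Longrightarrow> sdec n (vadd \<gamma> (rho n))"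
  unfolding sdec_def
proof (intro allI impI)
  fix i j assume g: "\<gamma> \<in> Ptilde n" and ij: "i < j" "j < n"
  then have "\<gamma> j \<le> \<gamma> i" unfolding Ptilde_def by simp
  moreover have "rho n j < rho n i" using ij by (simp add: rho_def)
  ultimately show "vadd \<gamma> (rho n) j < vadd \<gamma> (rho n) i" by simp
qed

lemma sdec_Ptilde:
  assumes "\<nu> \<in> Zs n" "sdec n (vadd \<nu> (rho n))"
  shows "\<nu> \<in> Ptilde n"
  unfolding Ptilde_def
proof (intro CollectI conjI allI impI)
  fix i assume "n \<le> i" then show "\<nu> i = 0" using assms(1) by (simp add: Zs_def)
next
  fix i j assume ij: "i \<le> j" "j < n"
  have "vadd \<nu> (rho n) j \<le> vadd \<nu> (rho n) i - (int j - int i)"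
    by (rule sdec_gap[OF assms(2) ij])
  then show "\<nu> j \<le> \<nu> i" using ij by (simp add: rho_def)
qed

lemma dotact_id: "dotact n id \<beta> = \<beta>"
  by (simp add: dotact_def pact_id fun_eq_iff)

lemma dotact_cancel:
  assumes t: "\<tau> permutes {..<n}"
  shows "dotact n (inv \<tau>) (dotact n \<tau> \<beta>) = \<beta>" "dotact n \<tau> (dotact n (inv \<tau>) \<beta>) = \<beta>"
  using t by (simp_all add: dotact_comp permutes_inv permutes_inv_o dotact_id)

lemma vadd_dotact: "vadd (dotact n \<tau> \<beta>) (rho n) = pact \<tau> (vadd \<beta> (rho n))"
  by (simp add: dotact_def fun_eq_iff)

lemma sorting:
  assumes Z: "\<nu> \<in> Zs n" and inj: "inj_on (vadd \<nu> (rho n)) {..<n}"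
  obtains \<tau> where "\<tau> permutes {..<n}" "dotact n (inv \<tau>) \<nu> \<in> Ptilde n"
proof -
  define w where "w = vadd \<nu> (rho n)"
  define L where "L = map w [0..<n]"
  define ys where "ys = rev (sort L)"
  have "mset ys = mset L" by (simp add: ys_def)
  then obtain p where p: "p permutes {..<length L}" "permute_list p L = ys"
    by (rule mset_eq_permutation)
  have lenL: "length L = n" by (simp add: L_def)
  have pn: "p permutes {..<n}" using p lenL by simp
  have yi: "ys ! i = w (p i)" if "i < n" for i
  proof -
    have "ys ! i = permute_list p L ! i" using p by simp
    also have "\<dots> = L ! p i" using permute_list_nth[OF p(1)] that lenL by simp
    also have "\<dots> = w (p i)" using perm_lt[OF pn, of i] that by (simp add: L_def)
    finally show ?thesis .
  qed
  have "distinct L" unfolding L_def w_def using inj by (simp add: distinct_map atLeast0LessThan[symmetric])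
  then have ss: "sorted_wrt (<) (sort L)" by (simp add: strict_sorted_iff)
  have lens: "length (sort L) = n" using lenL by simp
  have ysdec: "ys ! j < ys ! i" if "i < j" "j < n" for i j
  proof -
    have "ys ! i = sort L ! (n - Suc i)" "ys ! j = sort L ! (n - Suc j)"
      using that lens by (simp_all add: ys_def rev_nth)
    moreover have "sort L ! (n - Suc j) < sort L ! (n - Suc i)"
      using sorted_wrt_nth_less[OF ss, of "n - Suc j" "n - Suc i"] that lens by simp
    ultimately show ?thesis by simp
  qed
  define \<gamma> where "\<gamma> = dotact n (inv p) \<nu>"
  have gZ: "\<gamma> \<in> Zs n" unfolding \<gamma>_def by (rule Zs_dotact[OF Z permutes_inv[OF pn]])
  have gv: "vadd \<gamma> (rho n) i = w (p i)" for i
    unfolding \<gamma>_def vadd_dotact w_def using permutes_inv_inv[OF pn] by (simp add: pact_def)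
  have "sdec n (vadd \<gamma> (rho n))"
    unfolding sdec_def
  proof (intro allI impI)
    fix i j assume ij: "i < j" "j < n"
    have "vadd \<gamma> (rho n) j = ys ! j" using gv yi ij by simp
    also have "\<dots> < ys ! i" using ysdec ij by simp
    also have "\<dots> = vadd \<gamma> (rho n) i" using gv yi ij by simp
    finally show "vadd \<gamma> (rho n) j < vadd \<gamma> (rho n) i" .
  qed
  then have "\<gamma> \<in> Ptilde n" by (rule sdec_Ptilde[OF gZ])
  then show ?thesis using that pn \<gamma>_def by blast
qed

lemma sdec_perm_id:
  assumes a: "sdec n a" and b: "sdec n b" and p: "\<pi> permutes {..<n}"
    and eq: "\<And>i. i < n \<Longrightarrow> a i = b (\<pi> i)"
  shows "\<pi> = id"
proof (rule ccontr)
  assume ne: "\<pi> \<noteq> id"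
  have "\<exists>i. i < n \<and> \<pi> i \<noteq> i"
  proof (rule ccontr)
    assume "\<not> (\<exists>i. i < n \<and> \<pi> i \<noteq> i)"
    then have "\<pi> x = x" for x using permutes_not_in[OF p, of x] by (cases "x < n") auto
    then show False using ne by (auto simp: fun_eq_iff)
  qed
  then obtain i0 where i0: "i0 < n" "\<pi> i0 \<noteq> i0" and least0: "\<forall>m<i0. \<not> (m < n \<and> \<pi> m \<noteq> m)"
    using exists_least_iff[of "\<lambda>i. i < n \<and> \<pi> i \<noteq> i"] by blast
  have least: "\<pi> k = k" if "k < i0" for k using least0 that i0(1) by simp
  have pinj: "inj \<pi>" using permutes_inj[OF p] .
  have pi0n: "\<pi> i0 < n" using perm_lt[OF p] i0 by simp
  have gt: "i0 < \<pi> i0"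
  proof (rule ccontr)
    assume "\<not> i0 < \<pi> i0"
    then have "\<pi> i0 < i0" using i0 by simp
    then have "\<pi> (\<pi> i0) = \<pi> i0" using least by simp
    then have "\<pi> i0 = i0" using pinj by (simp add: inj_eq)
    then show False using i0 by simp
  qed
  define j where "j = inv \<pi> i0"
  have pj: "\<pi> j = i0" unfolding j_def using permutes_inverses(1)[OF p] by simp
  have jn: "j < n" unfolding j_def using inv_perm_lt[OF p] i0 by simp
  have "j \<noteq> i0" using pj i0 by auto
  moreover have "\<not> j < i0"
  proof
    assume "j < i0"
    then have "\<pi> j = j" by (rule least)
    then show False using pj \<open>j < i0\<close> by simp
  qed
  ultimately have ji: "i0 < j" by simp
  have "a j = b i0" using eq[OF jn] pj by simp
  moreover have "a i0 = b (\<pi> i0)" using eq[OF i0(1)] .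
  moreover have "b (\<pi> i0) < b i0" using b gt pi0n unfolding sdec_def by blast
  moreover have "a j < a i0" using a ji jn unfolding sdec_def by blast
  ultimately show False by simp
qed

lemma dot_inj:
  assumes g: "\<gamma> \<in> Ptilde n" and g': "\<gamma>' \<in> Ptilde n" and t: "\<tau> permutes {..<n}" and t': "\<tau>' permutes {..<n}"
    and eq: "dotact n \<tau> \<gamma> = dotact n \<tau>' \<gamma>'"
  shows "\<gamma> = \<gamma>' \<and> \<tau> = \<tau>'"
proof -
  have e1: "pact \<tau> (vadd \<gamma> (rho n)) = pact \<tau>' (vadd \<gamma>' (rho n))"
    using eq vadd_dotact by metis
  define \<pi> where "\<pi> = inv \<tau> \<circ> \<tau>'"
  have pp: "\<pi> permutes {..<n}" unfolding \<pi>_def by (intro permutes_compose permutes_inv t t')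
  have "vadd \<gamma>' (rho n) i = vadd \<gamma> (rho n) (\<pi> i)" for i
  proof -
    have "pact \<tau> (vadd \<gamma> (rho n)) (\<tau>' i) = pact \<tau>' (vadd \<gamma>' (rho n)) (\<tau>' i)" using e1 by simp
    then show ?thesis unfolding pact_def \<pi>_def using permutes_inverses(2)[OF t'] by simp
  qed
  then have "\<pi> = id" using sdec_perm_id[OF Ptilde_sdec[OF g'] Ptilde_sdec[OF g] pp] by blast
  then have tt: "\<tau> = \<tau>'"
  proof -
    assume pid: "\<pi> = id"
    have "\<tau>' x = \<tau> x" for x
    proof -
      have "\<tau>' x = \<tau> (inv \<tau> (\<tau>' x))" using permutes_inverses(1)[OF t] by simp
      also have "inv \<tau> (\<tau>' x) = x" using pid unfolding \<pi>_def by (simp add: fun_eq_iff)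
      finally show ?thesis .
    qed
    then show ?thesis by (simp add: fun_eq_iff)
  qed
  then have "dotact n (inv \<tau>) (dotact n \<tau> \<gamma>) = dotact n (inv \<tau>) (dotact n \<tau> \<gamma>')" using eq by simp
  then have "\<gamma> = \<gamma>'" using dotact_cancel[OF t] by simp
  then show ?thesis using tt by simp
qed




lemma Sn_image_comp:
  assumes t: "\<tau> \<in> Sn n"
  shows "sum f (Sn n) = (\<Sum>\<sigma>\<in>Sn n. f (\<tau> \<circ> \<sigma>))"
proof (rule sum.reindex_bij_witness[where i = "\<lambda>\<sigma>. inv \<tau> \<circ> \<sigma>" and j = "\<lambda>\<sigma>. \<tau> \<circ> \<sigma>", symmetric])
  have tp: "\<tau> permutes {..<n}" using t by (simp add: Sn_iff)
  fix a :: "nat \<Rightarrow> nat"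
  show "inv \<tau> \<circ> (\<tau> \<circ> a) = a" by (simp add: fun_eq_iff permutes_inverses[OF tp])
  show "a \<in> Sn n \<Longrightarrow> \<tau> \<circ> a \<in> Sn n" using tp by (simp add: Sn_iff permutes_compose)
  show "\<tau> \<circ> (inv \<tau> \<circ> a) = a" by (simp add: fun_eq_iff permutes_inverses[OF tp])
  show "a \<in> Sn n \<Longrightarrow> inv \<tau> \<circ> a \<in> Sn n" using tp by (simp add: Sn_iff permutes_compose permutes_inv)
  show "f (\<tau> \<circ> a) = f (\<tau> \<circ> a)" ..
qed

lemma qpart_ne_mults: "qpart n R w \<noteq> 0 \<Longrightarrow> mults n R w \<noteq> {}"
  using qpart_zero by blast

lemma PA_wt: "PA n w \<noteq> 0 \<Longrightarrow> wt n w = 0"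
proof -
  assume "PA n w \<noteq> 0"
  then obtain m where m: "m \<in> mults n (rootsA n) w" unfolding PA_def using qpart_zero by blast
  show "wt n w = 0" using mults_wt[OF finite_rootsA m] rootsA_props(2) by simp
qed

definition cfL :: "nat \<Rightarrow> zvec set \<Rightarrow> zvec \<Rightarrow> int" where
  "cfL n L \<beta> = int (card (mults n L \<beta>))"

context
  fixes n :: nat and L :: "zvec set" and lam \<mu> :: zvec
  assumes LS: "LongSet n L" and lamP: "lam \<in> Ptilde n"
begin

definition "hi = \<bar>lam 0\<bar> + int n"
definition "lo = wt n \<mu> - int n * hi"
definition "Bx = {\<nu>. \<nu> \<in> Zs n \<and> (\<forall>i<n. lo \<le> \<nu> i + rho n i \<and> \<nu> i + rho n i \<le> hi)}"
definition "Af \<nu> = (\<Sum>\<sigma>\<in>Sn n. eps n \<sigma> * qpart n L (vsub (dotact n \<sigma> lam) \<nu>))"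

lemma lamZ: "lam \<in> Zs n" using lamP by (simp add: Ptilde_def Zs_def)

lemma rho_bounds: "0 \<le> rho n i" "rho n i \<le> int n"
  by (auto simp: rho_def)

lemma finite_Bx: "finite Bx"
proof (rule finite_subset)
  show "Bx \<subseteq> {f. \<forall>x. (x \<in> {..<n} \<longrightarrow> f x \<in> {lo - int n..hi}) \<and> (x \<notin> {..<n} \<longrightarrow> f x = 0)}"
  proof
    fix f assume f: "f \<in> Bx"
    have "f x \<in> {lo - int n..hi}" if "x < n" for x
    proof -
      have "lo \<le> f x + rho n x" "f x + rho n x \<le> hi" using f that by (auto simp: Bx_def)
      then show ?thesis using rho_bounds[of x] by simp
    qed
    moreover have "f x = 0" if "\<not> x < n" for x using f that by (simp add: Bx_def Zs_def)
    ultimately show "f \<in> {f. \<forall>x. (x \<in> {..<n} \<longrightarrow> f x \<in> {lo - int n..hi}) \<and> (x \<notin> {..<n} \<longrightarrow> f x = 0)}"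
      by auto
  qed
  show "finite {f. \<forall>x. (x \<in> {..<n} \<longrightarrow> f x \<in> {lo - int n..hi}) \<and> (x \<notin> {..<n} \<longrightarrow> (f x :: int) = 0)}"
    by (rule finite_set_of_finite_funs) auto
qed

lemma Bx_Zs: "Bx \<subseteq> Zs n" by (auto simp: Bx_def)

lemma Bx_dot:
  assumes "\<nu> \<in> Bx" "\<tau> permutes {..<n}"
  shows "dotact n \<tau> \<nu> \<in> Bx"
proof -
  have "vadd (dotact n \<tau> \<nu>) (rho n) i = vadd \<nu> (rho n) (inv \<tau> i)" for i
    by (simp add: vadd_dotact pact_def del: vadd_apply)
  then have e: "dotact n \<tau> \<nu> i + rho n i = \<nu> (inv \<tau> i) + rho n (inv \<tau> i)" for i by simp
  show ?thesis unfolding Bx_def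
  proof (intro CollectI conjI allI impI)
    show "dotact n \<tau> \<nu> \<in> Zs n" using assms Bx_Zs by (intro Zs_dotact) auto
    fix i assume "i < n"
    then have "inv \<tau> i < n" using inv_perm_lt[OF assms(2)] by simp
    then show "lo \<le> dotact n \<tau> \<nu> i + rho n i" "dotact n \<tau> \<nu> i + rho n i \<le> hi"
      using assms(1) e[of i] by (auto simp: Bx_def)
  qed
qed

lemma bound:
  assumes vZ: "v \<in> Zs n" and s: "\<sigma> permutes {..<n}" and le: "\<And>i. i < n \<Longrightarrow> v i \<le> dotact n \<sigma> lam i"
    and w: "wt n v = wt n \<mu>"
  shows "v \<in> Bx"
proof -
  have hi0: "0 \<le> hi" by (simp add: hi_def)
  have up: "v i + rho n i \<le> hi" if i: "i < n" for i
  proof -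
    have "v i + rho n i \<le> dotact n \<sigma> lam i + rho n i" using le[OF i] by simp
    also have "\<dots> = lam (inv \<sigma> i) + rho n (inv \<sigma> i)"
      by (simp add: dotact_def pact_def)
    also have "\<dots> \<le> hi"
    proof -
      have "lam (inv \<sigma> i) \<le> lam 0" using lamP inv_perm_lt[OF s] i by (simp add: Ptilde_def)
      then show ?thesis using rho_bounds[of "inv \<sigma> i"] by (simp add: hi_def)
    qed
    finally show ?thesis .
  qed
  have low: "lo \<le> v i + rho n i" if i: "i < n" for i
  proof -
    have vj: "v j \<le> hi" if "j < n" for j using up[OF that] rho_bounds[of j] by simp
    have "wt n v = v i + (\<Sum>j\<in>{..<n} - {i}. v j)"
      unfolding wt_def using i by (simp add: sum.remove)
    also have "(\<Sum>j\<in>{..<n} - {i}. v j) \<le> of_nat (card ({..<n} - {i})) * hi"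
      by (rule sum_bounded_above) (use vj in auto)
    also have "\<dots> \<le> int n * hi" using hi0 i by (intro mult_right_mono) auto
    finally have "wt n v \<le> v i + int n * hi" by simp
    then show ?thesis using w rho_bounds[of i] by (simp add: lo_def)
  qed
  show ?thesis unfolding Bx_def using vZ up low by blast
qed

lemma Af_dot:
  assumes t: "\<tau> \<in> Sn n"
  shows "Af (dotact n \<tau> \<nu>) = eps n \<tau> * Af \<nu>"
proof -
  have tp: "\<tau> permutes {..<n}" using t by (simp add: Sn_iff)
  have key: "vsub (dotact n \<sigma> lam) (dotact n \<tau> \<nu>) = pact \<tau> (vsub (dotact n (inv \<tau> \<circ> \<sigma>) lam) \<nu>)"
    if s: "\<sigma> permutes {..<n}" for \<sigma>
  proof -
    have ii: "inv (inv \<tau> \<circ> \<sigma>) = inv \<sigma> \<circ> \<tau>"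
      using s tp by (simp add: o_inv_distrib permutes_bij bij_imp_bij_inv permutes_inv_inv)
    show ?thesis
      by (simp add: fun_eq_iff dotact_def pact_def ii permutes_inverses[OF tp])
  qed
  have "Af (dotact n \<tau> \<nu>) = (\<Sum>\<sigma>\<in>Sn n. eps n \<sigma> * qpart n L (vsub (dotact n (inv \<tau> \<circ> \<sigma>) lam) \<nu>))"
    unfolding Af_def
  proof (rule sum.cong[OF refl])
    fix \<sigma> assume "\<sigma> \<in> Sn n"
    then have s: "\<sigma> permutes {..<n}" by (simp add: Sn_iff)
    show "eps n \<sigma> * qpart n L (vsub (dotact n \<sigma> lam) (dotact n \<tau> \<nu>)) = eps n \<sigma> * qpart n L (vsub (dotact n (inv \<tau> \<circ> \<sigma>) lam) \<nu>)"
      using key[OF s] LS_qpart_pact[OF LS tp] by simp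
  qed
  also have "\<dots> = (\<Sum>\<sigma>\<in>Sn n. eps n (\<tau> \<circ> \<sigma>) * qpart n L (vsub (dotact n (inv \<tau> \<circ> (\<tau> \<circ> \<sigma>)) lam) \<nu>))"
    by (rule Sn_image_comp[OF t])
  also have "\<dots> = (\<Sum>\<sigma>\<in>Sn n. eps n \<tau> * (eps n \<sigma> * qpart n L (vsub (dotact n \<sigma> lam) \<nu>)))"
  proof (rule sum.cong[OF refl])
    fix \<sigma> assume s: "\<sigma> \<in> Sn n"
    have "inv \<tau> \<circ> (\<tau> \<circ> \<sigma>) = \<sigma>" by (simp add: fun_eq_iff permutes_inverses[OF tp])
    then show "eps n (\<tau> \<circ> \<sigma>) * qpart n L (vsub (dotact n (inv \<tau> \<circ> (\<tau> \<circ> \<sigma>)) lam) \<nu>) = eps n \<tau> * (eps n \<sigma> * qpart n L (vsub (dotact n \<sigma> lam) \<nu>))"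
      using eps_comp[OF t s] by (simp add: mult.assoc)
  qed
  also have "\<dots> = eps n \<tau> * Af \<nu>" unfolding Af_def by (simp add: sum_distrib_left)
  finally show ?thesis .
qed

lemma Af_sing:
  assumes ij: "i \<noteq> j" "i < n" "j < n" and eq: "vadd \<nu> (rho n) i = vadd \<nu> (rho n) j"
  shows "Af \<nu> = 0"
proof -
  define t where "t = Transposition.transpose i j"
  have tS: "t \<in> Sn n" unfolding t_def Sn_iff using ij by (intro permutes_swap_id) auto
  have d: "dotact n t \<nu> = \<nu>"
  proof -
    have "vadd \<nu> (rho n) (t k) = vadd \<nu> (rho n) k" for k
      using eq unfolding t_def by (auto simp: Transposition.transpose_def)
    then have "\<nu> (t k) + rho n (t k) - rho n k = \<nu> k" for k by (metis add_diff_cancel_right' vadd_apply)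
    then show ?thesis unfolding t_def by (simp add: dotact_def pact_def fun_eq_iff)
  qed
  have "Af \<nu> = eps n t * Af \<nu>" using Af_dot[OF tS, of \<nu>] unfolding d .
  also have "eps n t = -1" unfolding t_def by (rule eps_transp[OF ij])
  finally have "Af \<nu> = - Af \<nu>" by simp
  then have "coeff (Af \<nu>) k = 0" for k by (metis coeff_minus neg_equal_zero)
  then show ?thesis by (simp add: poly_eq_iff)
qed

lemma step_KC:
  "altsum n (qpart n (rootsA n \<union> L)) lam \<mu> = (\<Sum>\<nu>\<in>Bx. Af \<nu> * PA n (vsub \<nu> \<mu>))"
proof -
  have each: "qpart n (rootsA n \<union> L) (vsub (pact \<sigma> (vadd lam (rho n))) (vadd \<mu> (rho n)))
     = (\<Sum>\<nu>\<in>Bx. qpart n L (vsub (dotact n \<sigma> lam) \<nu>) * PA n (vsub \<nu> \<mu>))"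
    if s: "\<sigma> permutes {..<n}" for \<sigma>
  proof -
    define \<beta> where "\<beta> = vsub (pact \<sigma> (vadd lam (rho n))) (vadd \<mu> (rho n))"
    define sl where "sl = dotact n \<sigma> lam"
    have slZ: "sl \<in> Zs n" unfolding sl_def by (rule Zs_dotact[OF lamZ s])
    have bid: "vsub \<beta> (vsub sl \<nu>) = vsub \<nu> \<mu>" for \<nu>
      by (simp add: \<beta>_def sl_def dotact_def fun_eq_iff)
    have "qpart n (rootsA n \<union> L) \<beta> = (\<Sum>\<delta>\<in>(\<lambda>\<nu>. vsub sl \<nu>) ` Bx. qpart n L \<delta> * qpart n (rootsA n) (vsub \<beta> \<delta>))"
    proof (rule factorization[OF LS])
      show "finite ((\<lambda>\<nu>. vsub sl \<nu>) ` Bx)" using finite_Bx by simp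
      show "(\<lambda>\<nu>. vsub sl \<nu>) ` Bx \<subseteq> Zs n" using Bx_Zs slZ by (auto intro: Zs_vsub)
      fix \<delta> assume dZ: "\<delta> \<in> Zs n" and nz: "qpart n L \<delta> * qpart n (rootsA n) (vsub \<beta> \<delta>) \<noteq> 0"
      define \<nu> where "\<nu> = vsub sl \<delta>"
      have dn: "\<delta> = vsub sl \<nu>" by (simp add: \<nu>_def fun_eq_iff)
      have "qpart n L \<delta> \<noteq> 0" using nz by auto
      then obtain mL where mL: "mL \<in> mults n L \<delta>" using qpart_zero by blast
      have "PA n (vsub \<nu> \<mu>) \<noteq> 0" using nz bid[of \<nu>] dn unfolding PA_def by auto
      then have "wt n (vsub \<nu> \<mu>) = 0" by (rule PA_wt)
      then have w: "wt n \<nu> = wt n \<mu>" by (simp add: wt_vsub)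
      have "\<nu> \<in> Bx"
      proof (rule bound[OF _ s _ w])
        show "\<nu> \<in> Zs n" unfolding \<nu>_def using slZ dZ by (rule Zs_vsub)
        fix i assume "i < n"
        then have "\<delta> i \<ge> 0" by (rule LS_nonneg[OF LS mL])
        then show "\<nu> i \<le> dotact n \<sigma> lam i" by (simp add: \<nu>_def sl_def)
      qed
      then show "\<delta> \<in> (\<lambda>\<nu>. vsub sl \<nu>) ` Bx" using dn by blast
    qed
    also have "\<dots> = (\<Sum>\<nu>\<in>Bx. qpart n L (vsub sl \<nu>) * qpart n (rootsA n) (vsub \<beta> (vsub sl \<nu>)))"
    proof (subst sum.reindex)
      show "inj_on (vsub sl) Bx"
      proof (rule inj_onI)
        fix x y assume "vsub sl x = vsub sl y"
        then have "sl i - x i = sl i - y i" for i by (metis vsub_apply)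
        then show "x = y" by (simp add: fun_eq_iff)
      qed
    qed simp
    also have "\<dots> = (\<Sum>\<nu>\<in>Bx. qpart n L (vsub sl \<nu>) * PA n (vsub \<nu> \<mu>))"
      by (simp add: bid PA_def)
    finally show ?thesis unfolding \<beta>_def sl_def .
  qed
  have "altsum n (qpart n (rootsA n \<union> L)) lam \<mu>
      = (\<Sum>\<sigma>\<in>Sn n. eps n \<sigma> * (\<Sum>\<nu>\<in>Bx. qpart n L (vsub (dotact n \<sigma> lam) \<nu>) * PA n (vsub \<nu> \<mu>)))"
    unfolding altsum_def eps_def by (rule sum.cong[OF refl]) (simp add: each Sn_iff)
  also have "\<dots> = (\<Sum>\<sigma>\<in>Sn n. \<Sum>\<nu>\<in>Bx. eps n \<sigma> * qpart n L (vsub (dotact n \<sigma> lam) \<nu>) * PA n (vsub \<nu> \<mu>))"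
    by (simp add: sum_distrib_left mult.assoc)
  also have "\<dots> = (\<Sum>\<nu>\<in>Bx. \<Sum>\<sigma>\<in>Sn n. eps n \<sigma> * qpart n L (vsub (dotact n \<sigma> lam) \<nu>) * PA n (vsub \<nu> \<mu>))"
    by (rule sum.swap)
  also have "\<dots> = (\<Sum>\<nu>\<in>Bx. Af \<nu> * PA n (vsub \<nu> \<mu>))"
    unfolding Af_def by (simp add: sum_distrib_right)
  finally show ?thesis .
qed

lemma KA_wt:
  assumes "KA n \<gamma> \<mu> \<noteq> 0"
  shows "wt n \<gamma> = wt n \<mu>"
proof -
  obtain \<tau> where t: "\<tau> \<in> Sn n" and nz: "(-1) ^ inversions n \<tau> * PA n (vsub (pact \<tau> (vadd \<gamma> (rho n))) (vadd \<mu> (rho n))) \<noteq> 0"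
    using assms unfolding KA_def altsum_def by (rule sum.not_neutral_contains_not_neutral)
  then have "PA n (vsub (pact \<tau> (vadd \<gamma> (rho n))) (vadd \<mu> (rho n))) \<noteq> 0" by auto
  then have "wt n (vsub (pact \<tau> (vadd \<gamma> (rho n))) (vadd \<mu> (rho n))) = 0" by (rule PA_wt)
  then show ?thesis using t by (simp add: wt_vsub wt_vadd wt_pact Sn_iff)
qed

lemma step_reg:
  "(\<Sum>\<nu>\<in>Bx. Af \<nu> * PA n (vsub \<nu> \<mu>)) = (\<Sum>\<gamma>\<in>Ptilde n \<inter> Bx. Af \<gamma> * KA n \<gamma> \<mu>)"
proof -
  define F where "F = (\<lambda>\<nu>. Af \<nu> * PA n (vsub \<nu> \<mu>))"
  define G where "G = Ptilde n \<inter> Bx"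
  define \<Phi> where "\<Phi> = (\<lambda>p::zvec \<times> (nat \<Rightarrow> nat). dotact n (snd p) (fst p))"
  have finG: "finite G" unfolding G_def using finite_Bx by simp
  have img: "\<Phi> ` (G \<times> Sn n) \<subseteq> Bx"
    unfolding \<Phi>_def G_def by (auto intro!: Bx_dot simp: Sn_iff)
  have zero: "F \<nu> = 0" if nu: "\<nu> \<in> Bx - \<Phi> ` (G \<times> Sn n)" for \<nu>
  proof (cases "inj_on (vadd \<nu> (rho n)) {..<n}")
    case True
    have nZ: "\<nu> \<in> Zs n" using nu Bx_Zs by blast
    obtain \<tau> where tp: "\<tau> permutes {..<n}" and gP: "dotact n (inv \<tau>) \<nu> \<in> Ptilde n"
      using sorting[OF nZ True] by blast
    have gB: "dotact n (inv \<tau>) \<nu> \<in> Bx" using nu Bx_dot permutes_inv[OF tp] by blast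
    have "\<nu> = \<Phi> (dotact n (inv \<tau>) \<nu>, \<tau>)" unfolding \<Phi>_def using dotact_cancel(2)[OF tp] by simp
    moreover have "(dotact n (inv \<tau>) \<nu>, \<tau>) \<in> G \<times> Sn n" using gP gB tp by (simp add: G_def Sn_iff)
    ultimately show ?thesis using nu by blast
  next
    case False
    then obtain i j where "i \<in> {..<n}" "j \<in> {..<n}" "vadd \<nu> (rho n) i = vadd \<nu> (rho n) j" "i \<noteq> j"
      unfolding inj_on_def by blast
    then have "Af \<nu> = 0" using Af_sing by blast
    then show ?thesis by (simp add: F_def)
  qed
  have inj: "inj_on \<Phi> (G \<times> Sn n)"
  proof (rule inj_onI)
    fix p q assume p: "p \<in> G \<times> Sn n" and q: "q \<in> G \<times> Sn n" and e: "\<Phi> p = \<Phi> q"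
    have "fst p = fst q \<and> snd p = snd q"
      using p q e unfolding \<Phi>_def G_def by (intro dot_inj) (auto simp: Sn_iff)
    then show "p = q" by (simp add: prod_eq_iff)
  qed
  have "sum F Bx = sum F (\<Phi> ` (G \<times> Sn n))"
    by (rule sum.mono_neutral_right[OF finite_Bx img]) (use zero in blast)
  also have "\<dots> = sum (F \<circ> \<Phi>) (G \<times> Sn n)" by (rule sum.reindex[OF inj])
  also have "\<dots> = (\<Sum>\<gamma>\<in>G. \<Sum>\<tau>\<in>Sn n. F (dotact n \<tau> \<gamma>))"
    by (simp add: sum.cartesian_product \<Phi>_def case_prod_beta')
  also have "\<dots> = (\<Sum>\<gamma>\<in>G. Af \<gamma> * KA n \<gamma> \<mu>)"
  proof (rule sum.cong[OF refl])
    fix \<gamma> assume "\<gamma> \<in> G"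
    have "(\<Sum>\<tau>\<in>Sn n. F (dotact n \<tau> \<gamma>)) = (\<Sum>\<tau>\<in>Sn n. Af \<gamma> * (eps n \<tau> * PA n (vsub (pact \<tau> (vadd \<gamma> (rho n))) (vadd \<mu> (rho n)))))"
    proof (rule sum.cong[OF refl])
      fix \<tau> assume t: "\<tau> \<in> Sn n"
      have "vsub (dotact n \<tau> \<gamma>) \<mu> = vsub (pact \<tau> (vadd \<gamma> (rho n))) (vadd \<mu> (rho n))"
        by (simp add: dotact_def fun_eq_iff)
      then show "F (dotact n \<tau> \<gamma>) = Af \<gamma> * (eps n \<tau> * PA n (vsub (pact \<tau> (vadd \<gamma> (rho n))) (vadd \<mu> (rho n))))"
        unfolding F_def using Af_dot[OF t] by (simp add: mult_ac)
    qed
    also have "\<dots> = Af \<gamma> * KA n \<gamma> \<mu>"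
      unfolding KA_def altsum_def eps_def by (simp add: sum_distrib_left)
    finally show "(\<Sum>\<tau>\<in>Sn n. F (dotact n \<tau> \<gamma>)) = Af \<gamma> * KA n \<gamma> \<mu>" .
  qed
  finally show ?thesis unfolding F_def G_def .
qed

lemma term_eq:
  "Af \<gamma> * KA n \<gamma> \<mu> = monom 1 (nat ((wt n lam - wt n \<mu>) div 2)) * rhs_term n (cfL n L) lam \<mu> \<gamma>"
proof (cases "KA n \<gamma> \<mu> = 0")
  case True then show ?thesis by (simp add: rhs_term_def)
next
  case False
  then have w: "wt n \<gamma> = wt n \<mu>" by (rule KA_wt)
  define K where "K = nat ((wt n lam - wt n \<mu>) div 2)"
  have "Af \<gamma> = (\<Sum>\<sigma>\<in>Sn n. eps n \<sigma> * smult (cfL n L (vsub (dotact n \<sigma> lam) \<gamma>)) (monom 1 K))"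
    unfolding Af_def
  proof (rule sum.cong[OF refl])
    fix \<sigma> assume "\<sigma> \<in> Sn n"
    then have "wt n (vsub (dotact n \<sigma> lam) \<gamma>) = wt n lam - wt n \<mu>"
      using w by (simp add: wt_vsub wt_dotact Sn_iff)
    then show "eps n \<sigma> * qpart n L (vsub (dotact n \<sigma> lam) \<gamma>) = eps n \<sigma> * smult (cfL n L (vsub (dotact n \<sigma> lam) \<gamma>)) (monom 1 K)"
      using LS_qpart[OF LS] by (simp add: cfL_def K_def)
  qed
  then have "Af \<gamma> * KA n \<gamma> \<mu> = (\<Sum>\<sigma>\<in>Sn n. (eps n \<sigma> * smult (cfL n L (vsub (dotact n \<sigma> lam) \<gamma>)) (monom 1 K)) * KA n \<gamma> \<mu>)"
    by (simp add: sum_distrib_right)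
  also have "\<dots> = (\<Sum>\<sigma>\<in>Sn n. monom 1 K * (eps n \<sigma> * smult (cfL n L (vsub (dotact n \<sigma> lam) \<gamma>)) (KA n \<gamma> \<mu>)))"
  proof (rule sum.cong[OF refl])
    fix \<sigma>
    have h: "\<And>c p. smult c p = [:c:] * (p :: int poly)" by simp
    show "(eps n \<sigma> * smult (cfL n L (vsub (dotact n \<sigma> lam) \<gamma>)) (monom 1 K)) * KA n \<gamma> \<mu> = monom 1 K * (eps n \<sigma> * smult (cfL n L (vsub (dotact n \<sigma> lam) \<gamma>)) (KA n \<gamma> \<mu>))"
      by (simp only: h ac_simps)
  qed
  also have "\<dots> = monom 1 K * rhs_term n (cfL n L) lam \<mu> \<gamma>"
    unfolding rhs_term_def eps_def by (simp add: sum_distrib_left)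
  finally show ?thesis unfolding K_def .
qed

lemma main_generic:
  "altsum n (qpart n (rootsA n \<union> L)) lam \<mu> = rhs n (cfL n L) lam \<mu>"
proof -
  define T where "T = {\<gamma> \<in> Ptilde n. rhs_term n (cfL n L) lam \<mu> \<gamma> \<noteq> 0}"
  define G where "G = Ptilde n \<inter> Bx"
  have finG: "finite G" unfolding G_def using finite_Bx by simp
  have TG: "T \<subseteq> G"
  proof
    fix \<gamma> assume g: "\<gamma> \<in> T"
    then have gP: "\<gamma> \<in> Ptilde n" and nz: "rhs_term n (cfL n L) lam \<mu> \<gamma> \<noteq> 0" by (auto simp: T_def)
    obtain \<sigma> where s: "\<sigma> \<in> Sn n" and nz2: "(-1) ^ inversions n \<sigma> * smult (cfL n L (vsub (dotact n \<sigma> lam) \<gamma>)) (KA n \<gamma> \<mu>) \<noteq> 0"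
      using nz unfolding rhs_term_def by (rule sum.not_neutral_contains_not_neutral)
    have c: "cfL n L (vsub (dotact n \<sigma> lam) \<gamma>) \<noteq> 0" and k: "KA n \<gamma> \<mu> \<noteq> 0" using nz2 by auto
    then obtain m where m: "m \<in> mults n L (vsub (dotact n \<sigma> lam) \<gamma>)" unfolding cfL_def
      by (metis card.empty ex_in_conv of_nat_0)
    have sp: "\<sigma> permutes {..<n}" using s by (simp add: Sn_iff)
    have "\<gamma> \<in> Bx"
    proof (rule bound[OF _ sp _ KA_wt[OF k]])
      show "\<gamma> \<in> Zs n" using gP by (simp add: Ptilde_def Zs_def)
      fix i assume "i < n"
      from LS_nonneg[OF LS m this] show "\<gamma> i \<le> dotact n \<sigma> lam i" by simp
    qed
    then show "\<gamma> \<in> G" using gP by (simp add: G_def)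
  qed
  have "rhs n (cfL n L) lam \<mu> = monom 1 (nat ((wt n lam - wt n \<mu>) div 2)) * sum (rhs_term n (cfL n L) lam \<mu>) T"
    unfolding rhs_def T_def ..
  also have "sum (rhs_term n (cfL n L) lam \<mu>) T = sum (rhs_term n (cfL n L) lam \<mu>) G"
    by (rule sum.mono_neutral_left[OF finG TG]) (auto simp: T_def G_def)
  also have "monom 1 (nat ((wt n lam - wt n \<mu>) div 2)) * sum (rhs_term n (cfL n L) lam \<mu>) G = (\<Sum>\<gamma>\<in>G. Af \<gamma> * KA n \<gamma> \<mu>)"
    by (simp add: sum_distrib_left term_eq)
  also have "\<dots> = altsum n (qpart n (rootsA n \<union> L)) lam \<mu>"
    unfolding G_def by (simp add: step_KC step_reg)
  finally show ?thesis by simp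
qed

end

theorem mainTheorem2:
  fixes n :: nat and lam \<mu> :: "nat \<Rightarrow> int"
  assumes "n \<ge> 1"
    and "is_partition n lam" and "is_partition n \<mu>"
    and "wt n lam \<ge> wt n \<mu>"
  shows "KC n lam \<mu> = rhs n (cC n) lam \<mu> \<and> KD n lam \<mu> = rhs n (dD n) lam \<mu>"
proof -
  have lamP: "lam \<in> Ptilde n" using assms(2) by (simp add: is_partition_def)
  have "PC n = qpart n (rootsA n \<union> longC n)" by (simp add: fun_eq_iff PC_def)
  moreover have "PD n = qpart n (rootsA n \<union> longD n)" by (simp add: fun_eq_iff PD_def)
  moreover have "cC n = cfL n (longC n)" by (simp add: fun_eq_iff cC_def cfL_def)
  moreover have "dD n = cfL n (longD n)" by (simp add: fun_eq_iff dD_def cfL_def)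
  ultimately show ?thesis unfolding KC_def KD_def
    using main_generic[OF LongSet_longC lamP] main_generic[OF LongSet_longD lamP] by simp
qed


end
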